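(* Consider the $(1,\lambda)$-CSA-ES with cumulation, i.e. $0<c<1$, with any $\lambda\ge1$ and $d_\sigma>0$, applied to $f(x)=[x]_1$ on $\mathbb{R}^n$. Then almost surely $$\frac1t\ln\Big(\frac{\sigma_t}{\sigma_0}\Big)-\frac{c}{2d_\sigma n}\Big(\frac1t\sum_{i=1}^t[p_i]_1^2-1\Big)\xrightarrow[t\to\infty]{}0,$$ and for every $t$, $$\mathbb{E}\Big(\ln\Big(\frac{\sigma_{t+1}}{\sigma_t}\Big)\Big)=\frac{c}{2d_\sigma n}\big(\mathbb{E}([p_{t+1}]_1^2)-1\big).$$
   Context: For $x\in\mathbb{R}^n$, $[x]_i$ denotes its $i$-th coordinate. The $(1,\lambda)$-CSA-ES with parameters $\lambda\ge1$, $0<c\le1$, $d_\sigma>0$, minimizing $f:\mathbb{R}^n\to\mathbb{R}$, is defined as follows. Start from $X_0\in\mathbb{R}^n$, $\sigma_0>0$, and $p_0\sim\mathcal{N}(0,I_n)$. At iteration $t$, draw $\xi_{t,1},\ldots,\xi_{t,\lambda}$ i.i.d. $\sim\mathcal{N}(0,I_n)$, independent of everything before; the children are $Y_{t,i}=X_t+\sigma_t\xi_{t,i}$. The next parent $X_{t+1}$ is the child with the smallest $f$-value, and $\xi^\star_t$ denotes the corresponding $\xi_{t,i}$, so that $X_{t+1}=X_t+\sigma_t\xi^\star_t$. The cumulative path is $p_{t+1}=(1-c)p_t+\sqrt{c(2-c)}\,\xi^\star_t$, and the step-size is updated as $\sigma_{t+1}=\sigma_t\exp\!\big(\tfrac{c}{2d_\sigma}(\|p_{t+1}\|^2/n-1)\big)$.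 *)

theory Defs
  imports "HOL-Probability.Probability"
begin

text \<open>Vectors of R^n are represented as functions nat => real, coordinates 1..n
  ([x]_j = x j).  The noise of one iteration is given as xs :: nat => nat => real,
  xs i = xi_{t,i} (i in 1..lambda).\<close>

definition sqnorm :: "nat \<Rightarrow> (nat \<Rightarrow> real) \<Rightarrow> real" where
  "sqnorm n x = (\<Sum>j=1..n. (x j)\<^sup>2)"

text \<open>Index of the selected child (the child with smallest f-value; ties, which have
  probability zero, are broken by the smallest index).\<close>
definition csa_sel :: "((nat \<Rightarrow> real) \<Rightarrow> real) \<Rightarrow> nat \<Rightarrow> (nat \<Rightarrow> real) \<Rightarrow> real
     \<Rightarrow> (nat \<Rightarrow> nat \<Rightarrow> real) \<Rightarrow> nat" where
  "csa_sel f lam X \<sigma> xs = (LEAST i. 1 \<le> i \<and> i \<le> lam \<and>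
      (\<forall>k\<in>{1..lam}. f (\<lambda>j. X j + \<sigma> * xs i j) \<le> f (\<lambda>j. X j + \<sigma> * xs k j)))"

primrec csa_state :: "nat \<Rightarrow> nat \<Rightarrow> real \<Rightarrow> real \<Rightarrow> ((nat \<Rightarrow> real) \<Rightarrow> real)
     \<Rightarrow> (nat \<Rightarrow> real) \<Rightarrow> real \<Rightarrow> (nat \<Rightarrow> real) \<Rightarrow> (nat \<Rightarrow> nat \<Rightarrow> nat \<Rightarrow> real)
     \<Rightarrow> nat \<Rightarrow> (nat \<Rightarrow> real) \<times> (nat \<Rightarrow> real) \<times> real" where
  "csa_state n lam c d f X0 \<sigma>0 p0 xi 0 = (X0, p0, \<sigma>0)"
| "csa_state n lam c d f X0 \<sigma>0 p0 xi (Suc t) =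
     (case csa_state n lam c d f X0 \<sigma>0 p0 xi t of (X, p, \<sigma>) \<Rightarrow>
        let xstar = xi t (csa_sel f lam X \<sigma> (xi t));
            p' = (\<lambda>j. (1 - c) * p j + sqrt (c * (2 - c)) * xstar j)
        in ((\<lambda>j. X j + \<sigma> * xstar j), p',
            \<sigma> * exp (c / (2 * d) * (sqnorm n p' / real n - 1))))"

definition csa_X where "csa_X n lam c d f X0 \<sigma>0 p0 xi t = fst (csa_state n lam c d f X0 \<sigma>0 p0 xi t)"
definition csa_p where "csa_p n lam c d f X0 \<sigma>0 p0 xi t = fst (snd (csa_state n lam c d f X0 \<sigma>0 p0 xi t))"
definition csa_sigma where "csa_sigma n lam c d f X0 \<sigma>0 p0 xi t = snd (snd (csa_state n lam c d f X0 \<sigma>0 p0 xi t))"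

end

theory Submission
  imports Defs "HOL-Library.Discrete_Functions"
begin


definition selp :: "nat \<Rightarrow> (nat \<Rightarrow> real) \<Rightarrow> nat \<Rightarrow> bool" where
  "selp lam v l \<longleftrightarrow> l \<in> {1..lam} \<and> (\<forall>k\<in>{1..lam}. v l \<le> v k) \<and> (\<forall>k\<in>{1..<l}. v l < v k)"

lemma selp_unique: "selp lam v l \<Longrightarrow> selp lam v l' \<Longrightarrow> l = l'"
proof (rule ccontr)
  assume a: "selp lam v l" "selp lam v l'" "l \<noteq> l'"
  show False
  proof (cases "l < l'")
    case True
    then have "v l' < v l" using a unfolding selp_def by auto
    moreover have "v l \<le> v l'" using a unfolding selp_def by auto
    ultimately show False by simp
  next
    case False
    then have "l' < l" using a by simp
    then have "v l < v l'" using a unfolding selp_def by auto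
    moreover have "v l' \<le> v l" using a unfolding selp_def by auto
    ultimately show False by simp
  qed
qed

lemma selp_exists:
  assumes "lam \<ge> 1" shows "\<exists>l. selp lam v l"
proof -
  define L where "L = {l\<in>{1..lam}. \<forall>k\<in>{1..lam}. v l \<le> v k}"
  have "Min (v ` {1..lam}) \<in> v ` {1..lam}" using assms by (intro Min_in) auto
  then obtain m where m: "m \<in> {1..lam}" "v m = Min (v ` {1..lam})" by auto
  have "m \<in> L" using m by (auto simp: L_def)
  hence ne: "L \<noteq> {}" by auto
  have fin: "finite L" by (auto simp: L_def)
  define l where "l = Min L"
  have lL: "l \<in> L" using Min_in[OF fin ne] l_def by auto
  have "selp lam v l"
    unfolding selp_def
  proof (intro conjI ballI)
    show "l \<in> {1..lam}" using lL by (auto simp: L_def)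
    show "\<And>k. k \<in> {1..lam} \<Longrightarrow> v l \<le> v k" using lL by (auto simp: L_def)
    fix k assume k: "k \<in> {1..<l}"
    show "v l < v k"
    proof (rule ccontr)
      assume "\<not> v l < v k"
      hence "k \<in> L" using lL k by (auto simp: L_def)
      hence "l \<le> k" using Min_le[OF fin] l_def by auto
      with k show False by auto
    qed
  qed
  thus ?thesis by blast
qed

lemma Least_sel:
  assumes "selp lam v l"
  shows "(LEAST i. 1 \<le> i \<and> i \<le> lam \<and> (\<forall>k\<in>{1..lam}. v i \<le> v k)) = l"
proof (rule Least_equality)
  show "1 \<le> l \<and> l \<le> lam \<and> (\<forall>k\<in>{1..lam}. v l \<le> v k)" using assms by (auto simp: selp_def)
  fix y assume y: "1 \<le> y \<and> y \<le> lam \<and> (\<forall>k\<in>{1..lam}. v y \<le> v k)"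
  show "l \<le> y"
  proof (rule ccontr)
    assume "\<not> l \<le> y"
    hence "v l < v y" using assms y by (auto simp: selp_def)
    moreover have "v y \<le> v l" using y assms by (auto simp: selp_def)
    ultimately show False by simp
  qed
qed

lemma csa_sel_selp:
  assumes "\<sigma> > 0" "lam \<ge> 1"
  shows "selp lam (\<lambda>i. xs i 1) (csa_sel (\<lambda>x. x 1) lam X \<sigma> xs)"
proof -
  obtain l where l: "selp lam (\<lambda>i. xs i 1) l" using selp_exists assms by blast
  have "csa_sel (\<lambda>x. x 1) lam X \<sigma> xs = (LEAST i. 1 \<le> i \<and> i \<le> lam \<and> (\<forall>k\<in>{1..lam}. xs i 1 \<le> xs k 1))"
    unfolding csa_sel_def using assms(1) by simp
  also have "\<dots> = l" by (rule Least_sel[OF l])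
  finally show ?thesis using l by simp
qed

type_synonym env = "nat + nat \<times> nat \<times> nat \<Rightarrow> real"

definition etae :: "nat \<Rightarrow> env \<Rightarrow> nat \<Rightarrow> nat \<Rightarrow> real" where
  "etae lam e s j = (\<Sum>l\<in>{1..lam}. if selp lam (\<lambda>i. e (Inr (s,i,1))) l then e (Inr (s,l,j)) else 0)"

primrec Pe :: "nat \<Rightarrow> real \<Rightarrow> env \<Rightarrow> nat \<Rightarrow> nat \<Rightarrow> real" where
  "Pe lam c e 0 j = e (Inl j)"
| "Pe lam c e (Suc t) j = (1 - c) * Pe lam c e t j + sqrt (c * (2 - c)) * etae lam e t j"

lemma sum_selp:
  assumes "selp lam v l"
  shows "(\<Sum>l'\<in>{1..lam}. if selp lam v l' then g l' else 0) = g l"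
proof -
  have "(\<Sum>l'\<in>{1..lam}. if selp lam v l' then g l' else 0) = (\<Sum>l'\<in>{1..lam}. if l' = l then g l' else 0)"
  proof (rule sum.cong)
    fix l' assume "l' \<in> {1..lam}"
    show "(if selp lam v l' then g l' else 0) = (if l' = l then g l' else 0)"
    proof (cases "selp lam v l'")
      case True
      then have "l = l'" by (rule selp_unique[OF assms])
      then show ?thesis using True by simp
    next
      case False
      then have "l' \<noteq> l" using assms by blast
      then show ?thesis using False by simp
    qed
  qed simp
  also have "\<dots> = g l"
  proof -
    have "l \<in> {1..lam}" using assms unfolding selp_def by blast
    then show ?thesis by simp
  qed
  finally show ?thesis .
qed

lemma etae_sel: "selp lam (\<lambda>i. e (Inr (s,i,1))) l \<Longrightarrow> etae lam e s j = e (Inr (s,l,j))"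
  unfolding etae_def by (rule sum_selp)

definition envof :: "(nat \<Rightarrow> real) \<Rightarrow> (nat \<Rightarrow> nat \<Rightarrow> nat \<Rightarrow> real) \<Rightarrow> env" where
  "envof p0 xi = (\<lambda>k. case k of Inl j \<Rightarrow> p0 j | Inr (t, i, j) \<Rightarrow> xi t i j)"

lemma csa_state_Pe:
  assumes "lam \<ge> 1" "\<sigma>0 > 0"
  shows "snd (snd (csa_state n lam c d (\<lambda>x. x 1) X0 \<sigma>0 p0 xi t)) > 0 \<and>
         fst (snd (csa_state n lam c d (\<lambda>x. x 1) X0 \<sigma>0 p0 xi t)) = (\<lambda>j. Pe lam c (envof p0 xi) t j)"
proof (induction t)
  case 0
  then show ?case using assms by (simp add: envof_def)
next
  case (Suc t)
  obtain X p \<sigma> where st: "csa_state n lam c d (\<lambda>x. x 1) X0 \<sigma>0 p0 xi t = (X, p, \<sigma>)"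
    by (metis prod_cases3)
  have \<sigma>: "\<sigma> > 0" and p: "p = (\<lambda>j. Pe lam c (envof p0 xi) t j)" using Suc st by auto
  define l where "l = csa_sel (\<lambda>x. x 1) lam X \<sigma> (xi t)"
  have "selp lam (\<lambda>i. xi t i 1) l" unfolding l_def by (rule csa_sel_selp[OF \<sigma> assms(1)])
  hence "selp lam (\<lambda>i. envof p0 xi (Inr (t,i,1))) l" by (simp add: envof_def)
  hence et0: "\<And>j. etae lam (envof p0 xi) t j = xi t l j"
    by (subst etae_sel) (auto simp: envof_def)
  have et: "\<And>j. xi t (csa_sel (\<lambda>x. x 1) lam X \<sigma> (xi t)) j = etae lam (envof p0 xi) t j"
    using et0 l_def by simp
  show ?case using \<sigma> unfolding csa_state.simps st Let_def prod.case et by (simp add: p)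
qed

lemma csa_sigma_Suc:
  assumes "lam \<ge> 1" "\<sigma>0 > 0"
  shows "csa_sigma n lam c d (\<lambda>x. x 1) X0 \<sigma>0 p0 xi (Suc t) =
     csa_sigma n lam c d (\<lambda>x. x 1) X0 \<sigma>0 p0 xi t *
       exp (c / (2 * d) * (sqnorm n (\<lambda>j. Pe lam c (envof p0 xi) (Suc t) j) / real n - 1))"
proof -
  obtain X p \<sigma> where st: "csa_state n lam c d (\<lambda>x. x 1) X0 \<sigma>0 p0 xi t = (X, p, \<sigma>)"
    by (metis prod_cases3)
  have p: "p = (\<lambda>j. Pe lam c (envof p0 xi) t j)" using csa_state_Pe[OF assms, of n c d X0 p0 xi t] st by auto
  have \<sigma>: "\<sigma> > 0" using csa_state_Pe[OF assms, of n c d X0 p0 xi t] st by auto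
  define l where "l = csa_sel (\<lambda>x. x 1) lam X \<sigma> (xi t)"
  have "selp lam (\<lambda>i. xi t i 1) l" unfolding l_def by (rule csa_sel_selp[OF \<sigma> assms(1)])
  hence "selp lam (\<lambda>i. envof p0 xi (Inr (t,i,1))) l" by (simp add: envof_def)
  hence et0: "\<And>j. etae lam (envof p0 xi) t j = xi t l j"
    by (subst etae_sel) (auto simp: envof_def)
  have et: "\<And>j. xi t (csa_sel (\<lambda>x. x 1) lam X \<sigma> (xi t)) j = etae lam (envof p0 xi) t j"
    using et0 l_def by simp
  show ?thesis unfolding csa_sigma_def csa_state.simps st Let_def prod.case et by (simp add: p)
qed

lemma csa_sigma_pos:
  assumes "lam \<ge> 1" "\<sigma>0 > 0"
  shows "csa_sigma n lam c d (\<lambda>x. x 1) X0 \<sigma>0 p0 xi t > 0"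
  using csa_state_Pe[OF assms] by (simp add: csa_sigma_def)

lemma csa_p_Pe:
  assumes "lam \<ge> 1" "\<sigma>0 > 0"
  shows "csa_p n lam c d (\<lambda>x. x 1) X0 \<sigma>0 p0 xi t = (\<lambda>j. Pe lam c (envof p0 xi) t j)"
  using csa_state_Pe[OF assms] by (simp add: csa_p_def)

lemma ln_sigma_step:
  assumes "lam \<ge> 1" "\<sigma>0 > 0"
  shows "ln (csa_sigma n lam c d (\<lambda>x. x 1) X0 \<sigma>0 p0 xi (Suc t) / csa_sigma n lam c d (\<lambda>x. x 1) X0 \<sigma>0 p0 xi t)
     = c / (2 * d) * (sqnorm n (\<lambda>j. Pe lam c (envof p0 xi) (Suc t) j) / real n - 1)"
  using csa_sigma_pos[OF assms, of n c d X0 p0 xi t] unfolding csa_sigma_Suc[OF assms] by (simp del: Pe.simps)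

lemma ln_sigma_sum:
  assumes "lam \<ge> 1" "\<sigma>0 > 0"
  shows "ln (csa_sigma n lam c d (\<lambda>x. x 1) X0 \<sigma>0 p0 xi t / \<sigma>0)
     = (\<Sum>s<t. c / (2 * d) * (sqnorm n (\<lambda>j. Pe lam c (envof p0 xi) (Suc s) j) / real n - 1))"
proof (induction t)
  case 0
  then show ?case using assms by (simp add: csa_sigma_def)
next
  case (Suc t)
  have p: "csa_sigma n lam c d (\<lambda>x. x 1) X0 \<sigma>0 p0 xi t > 0" by (rule csa_sigma_pos[OF assms])
  have "ln (csa_sigma n lam c d (\<lambda>x. x 1) X0 \<sigma>0 p0 xi (Suc t) / \<sigma>0)
     = ln (csa_sigma n lam c d (\<lambda>x. x 1) X0 \<sigma>0 p0 xi t / \<sigma>0) + 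
       ln (csa_sigma n lam c d (\<lambda>x. x 1) X0 \<sigma>0 p0 xi (Suc t) / csa_sigma n lam c d (\<lambda>x. x 1) X0 \<sigma>0 p0 xi t)"
    using p assms csa_sigma_pos[OF assms, of n c d X0 p0 xi "Suc t"] by (simp add: ln_div)
  then show ?case using Suc unfolding ln_sigma_step[OF assms] by (simp del: Pe.simps)
qed



lemma comp_meas_any: "(\<lambda>e. e k) \<in> borel_measurable (PiM A (\<lambda>_. (borel :: real measure)))"
proof (cases "k \<in> A")
  case True then show ?thesis by (rule measurable_component_singleton)
next
  case False
  have eq: "\<And>w. w \<in> space (PiM A (\<lambda>_. (borel :: real measure))) \<Longrightarrow> w k = (undefined::real)"
  proof -
    fix w assume "w \<in> space (PiM A (\<lambda>_. (borel :: real measure)))"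
    then have "w \<in> PiE A (\<lambda>_. UNIV)" by (simp add: space_PiM)
    then show "w k = undefined" using False by (rule PiE_arb)
  qed
  have "(\<lambda>e. (undefined::real)) \<in> borel_measurable (PiM A (\<lambda>_. (borel :: real measure)))"
    by (rule measurable_const) simp
  show ?thesis
  proof -
    have "((\<lambda>w. w k) \<in> borel_measurable (PiM A (\<lambda>_. (borel :: real measure)))) = ((\<lambda>w. (undefined::real)) \<in> borel_measurable (PiM A (\<lambda>_. (borel :: real measure))))"
      apply (rule measurable_cong[where f="\<lambda>w. w k" and g="\<lambda>w. (undefined::real)" and M="PiM A (\<lambda>_. (borel :: real measure))" and M'=borel])
      using eq by blast
    then show ?thesis using \<open>(\<lambda>e. (undefined::real)) \<in> borel_measurable (PiM A (\<lambda>_. (borel :: real measure)))\<close> by simp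
  qed
qed

lemma selp_cong: "(\<And>k. k \<in> {1..lam} \<Longrightarrow> v k = v' k) \<Longrightarrow> l \<in> {1..lam} \<Longrightarrow> selp lam v l = selp lam v' l"
  unfolding selp_def by auto

lemma etae_cong:
  assumes "\<And>l. l \<in> {1..lam} \<Longrightarrow> e (Inr (s,l,1)) = e' (Inr (s,l,1)) \<and> e (Inr (s,l,j)) = e' (Inr (s,l,j))"
  shows "etae lam e s j = etae lam e' s j"
  unfolding etae_def
proof (rule sum.cong)
  fix l assume l: "l \<in> {1..lam}"
  have "selp lam (\<lambda>i. e (Inr (s, i, 1))) l = selp lam (\<lambda>i. e' (Inr (s, i, 1))) l"
    by (rule selp_cong) (use assms l in auto)
  then show "(if selp lam (\<lambda>i. e (Inr (s, i, 1))) l then e (Inr (s, l, j)) else 0) =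
        (if selp lam (\<lambda>i. e' (Inr (s, i, 1))) l then e' (Inr (s, l, j)) else 0)"
    using assms l by auto
qed simp

definition Bef :: "nat \<Rightarrow> nat \<Rightarrow> nat \<Rightarrow> (nat + nat \<times> nat \<times> nat) set" where
  "Bef lam j t = {Inl j} \<union> {Inr (s,l,j') | s l j'. s < t \<and> l \<in> {1..lam} \<and> j' \<in> {1, j}}"

definition Blk :: "nat \<Rightarrow> nat \<Rightarrow> nat \<Rightarrow> (nat + nat \<times> nat \<times> nat) set" where
  "Blk lam j t = {Inr (t,l,j') | l j'. l \<in> {1..lam} \<and> j' \<in> {1, j}}"

lemma Pe_cong:
  "(\<And>k. k \<in> Bef lam j t \<Longrightarrow> e k = e' k) \<Longrightarrow> Pe lam c e t j = Pe lam c e' t j"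
proof (induction t)
  case 0 then show ?case by (simp add: Bef_def)
next
  case (Suc t)
  have "Pe lam c e t j = Pe lam c e' t j" using Suc by (intro Suc.IH) (auto simp: Bef_def)
  moreover have "etae lam e t j = etae lam e' t j"
    by (rule etae_cong) (use Suc.prems in \<open>auto simp: Bef_def\<close>)
  ultimately show ?case by simp
qed

lemma Bef_mono: "t \<le> T \<Longrightarrow> Bef lam j t \<subseteq> Bef lam j T"
  unfolding Bef_def by auto

lemma pred_le_comp: "Measurable.pred (PiM A (\<lambda>_. (borel :: real measure))) (\<lambda>e. e a \<le> e b)"
  unfolding pred_def by (rule borel_measurable_le[OF comp_meas_any comp_meas_any])

lemma pred_less_comp: "Measurable.pred (PiM A (\<lambda>_. (borel :: real measure))) (\<lambda>e. e a < e b)"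
  unfolding pred_def by (rule borel_measurable_less[OF comp_meas_any comp_meas_any])

lemma selp_meas[measurable]: "Measurable.pred (PiM A (\<lambda>_. (borel :: real measure))) (\<lambda>e. selp lam (\<lambda>i. e (Inr (s, i, 1))) l)"
proof (cases "l \<in> {1..lam}")
  case True
  have eq: "(\<lambda>e. selp lam (\<lambda>i. e (Inr (s, i, 1))) l) = (\<lambda>e. (\<forall>k\<in>{1..lam}. e (Inr(s,l,1)) \<le> e (Inr(s,k,1))) \<and> (\<forall>k\<in>{1..<l}. e (Inr(s,l,1)) < e (Inr(s,k,1))))"
    using True by (auto simp: selp_def fun_eq_iff)
  then show ?thesis
    unfolding eq by (intro pred_intros_logic pred_intros_finite pred_le_comp pred_less_comp finite_atLeastAtMost finite_atLeastLessThan)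
next
  case False
  have eq: "(\<lambda>e. selp lam (\<lambda>i. e (Inr (s, i, 1))) l) = (\<lambda>e. False)"
    using False by (auto simp: selp_def fun_eq_iff)
  show ?thesis unfolding eq by (rule measurable_const, simp)
qed

lemma etae_meas[measurable]: "(\<lambda>e. etae lam e s j) \<in> borel_measurable (PiM A (\<lambda>_. (borel :: real measure)))"
  unfolding etae_def
  by (intro borel_measurable_sum measurable_If comp_meas_any measurable_const selp_meas[unfolded pred_def]) simp

lemma Pe_meas[measurable]: "(\<lambda>e. Pe lam c e t j) \<in> borel_measurable (PiM A (\<lambda>_. (borel :: real measure)))"
proof (induction t)
  case 0 show ?case by (simp add: comp_meas_any)
next
  case (Suc t)
  show ?case by (simp only: Pe.simps, intro borel_measurable_add borel_measurable_times measurable_const etae_meas Suc, simp_all)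
qed



lemma pow_add_bound: "\<bar>x + y\<bar> ^ p \<le> 2 ^ p * (\<bar>x\<bar> ^ p + \<bar>y\<bar> ^ p)" for x y :: real
proof -
  have "\<bar>x + y\<bar> \<le> 2 * max \<bar>x\<bar> \<bar>y\<bar>" by (auto simp: max_def)
  then have "\<bar>x + y\<bar> ^ p \<le> (2 * max \<bar>x\<bar> \<bar>y\<bar>) ^ p" by (intro power_mono) auto
  also have "\<dots> = 2 ^ p * max \<bar>x\<bar> \<bar>y\<bar> ^ p" by (simp add: power_mult_distrib)
  also have "max \<bar>x\<bar> \<bar>y\<bar> ^ p \<le> \<bar>x\<bar> ^ p + \<bar>y\<bar> ^ p" by (auto simp: max_def)
  finally show ?thesis by simp
qed

lemma mult_sq_bound: "u \<ge> 0 \<Longrightarrow> v \<ge> 0 \<Longrightarrow> u * v \<le> u ^ 2 + v ^ 2" for u v :: real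
proof -
  assume "u \<ge> 0" "v \<ge> 0"
  have "0 \<le> (u - v) ^ 2" by simp
  hence "2 * (u * v) \<le> u ^ 2 + v ^ 2" by (simp add: power2_eq_square algebra_simps)
  moreover have "u * v \<ge> 0" using \<open>u \<ge> 0\<close> \<open>v \<ge> 0\<close> by simp
  ultimately show ?thesis by linarith
qed

lemma floor_sqrt_filterlim: "filterlim floor_sqrt at_top at_top"
  unfolding filterlim_at_top
proof
  fix Z :: nat
  show "eventually (\<lambda>t. Z \<le> floor_sqrt t) at_top"
    using eventually_ge_at_top[of "Z ^ 2"] by eventually_elim (rule le_floor_sqrtI)
qed

lemma slln_det:
  fixes S :: "nat \<Rightarrow> real"
  assumes mono: "mono S" and nn: "\<And>t. S t \<ge> 0"
    and lim: "(\<lambda>m. S ((m + 1) ^ 2) / real ((m + 1) ^ 2)) \<longlonglongrightarrow> 1"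
  shows "(\<lambda>t. S t / real t) \<longlonglongrightarrow> 1"
proof -
  define R where "R m = S (m ^ 2) / real (m ^ 2)" for m
  have R: "R \<longlonglongrightarrow> 1"
    by (rule LIMSEQ_imp_Suc) (use lim in \<open>simp add: R_def\<close>)
  have q1: "(\<lambda>m. (real m / real (Suc m)) ^ 2) \<longlonglongrightarrow> 1"
    using tendsto_power[OF LIMSEQ_n_over_Suc_n, of 2] by simp
  have q2: "(\<lambda>m. (real (Suc m) / real m) ^ 2) \<longlonglongrightarrow> 1"
    using tendsto_power[OF LIMSEQ_Suc_n_over_n, of 2] by simp
  define lo where "lo m = R m * (real m / real (Suc m)) ^ 2" for m
  define hi where "hi m = R (Suc m) * (real (Suc m) / real m) ^ 2" for m
  have lo: "lo \<longlonglongrightarrow> 1" unfolding lo_def using tendsto_mult[OF R q1] by simp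
  have hi: "hi \<longlonglongrightarrow> 1" unfolding hi_def using tendsto_mult[OF LIMSEQ_Suc[OF R] q2] by simp
  have lo': "(\<lambda>t. lo (floor_sqrt t)) \<longlonglongrightarrow> 1" by (rule filterlim_compose[OF lo floor_sqrt_filterlim])
  have hi': "(\<lambda>t. hi (floor_sqrt t)) \<longlonglongrightarrow> 1" by (rule filterlim_compose[OF hi floor_sqrt_filterlim])
  have bounds: "lo (floor_sqrt t) \<le> S t / real t \<and> S t / real t \<le> hi (floor_sqrt t)" if t: "t \<ge> 1" for t
  proof -
    define m where "m = floor_sqrt t"
    have m1: "m \<ge> 1" using t by (simp add: m_def Suc_le_eq)
    have le: "m ^ 2 \<le> t" unfolding m_def by simp
    have lt: "t < (Suc m) ^ 2" unfolding m_def by (rule Suc_floor_sqrt_power2_gt)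
    have rle: "real (m ^ 2) \<le> real t" using le by linarith
    have rlt: "real t \<le> real (Suc m ^ 2)" using lt by linarith
    have mpos: "real (m ^ 2) > 0" using m1 by simp
    have tpos: "real t > 0" using t by simp
    have S1: "S (m ^ 2) \<le> S t" using mono le by (simp add: mono_def)
    have S2: "S t \<le> S (Suc m ^ 2)" using mono lt by (simp add: mono_def)
    have "lo m = S (m ^ 2) / real (Suc m ^ 2)"
      using m1 by (simp add: lo_def R_def power_divide)
    also have "\<dots> \<le> S (m ^ 2) / real t"
      by (rule divide_left_mono[OF rlt nn]) (use tpos in simp)
    also have "\<dots> \<le> S t / real t" by (rule divide_right_mono[OF S1]) simp
    finally have A: "lo m \<le> S t / real t" .
    have "S t / real t \<le> S (Suc m ^ 2) / real t" by (rule divide_right_mono[OF S2]) simp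
    also have "\<dots> \<le> S (Suc m ^ 2) / real (m ^ 2)"
      by (rule divide_left_mono[OF rle nn]) (use mpos tpos in simp)
    also have "\<dots> = hi m"
      using m1 by (simp add: hi_def R_def power_divide)
    finally have B: "S t / real t \<le> hi m" .
    show ?thesis using A B by (simp add: m_def)
  qed
  show ?thesis
  proof (rule tendsto_sandwich[OF _ _ lo' hi'])
    show "eventually (\<lambda>t. lo (floor_sqrt t) \<le> S t / real t) sequentially"
      using eventually_ge_at_top[of "1::nat"] by eventually_elim (use bounds in blast)
    show "eventually (\<lambda>t. S t / real t \<le> hi (floor_sqrt t)) sequentially"
      using eventually_ge_at_top[of "1::nat"] by eventually_elim (use bounds in blast)
  qed
qed

locale csa_prob = prob_space M for M :: "'a measure" +
  fixes n lam :: nat and c :: real and p0 :: "nat \<Rightarrow> 'a \<Rightarrow> real"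
    and xi :: "nat \<Rightarrow> nat \<Rightarrow> nat \<Rightarrow> 'a \<Rightarrow> real"
  assumes n1: "n \<ge> 1" and lam1: "lam \<ge> 1" and c0: "0 < c" and c1: "c < 1"
    and indep: "indep_vars (\<lambda>_. borel)
           (\<lambda>k. case k of Inl j \<Rightarrow> p0 j | Inr (t, i, j) \<Rightarrow> xi t i j)
           ({Inl j | j. j \<in> {1..n}} \<union> {Inr (t, i, j) | t i j. i \<in> {1..lam} \<and> j \<in> {1..n}})"
    and p0d: "\<forall>j\<in>{1..n}. distributed M lborel (p0 j) std_normal_density"
    and xid: "\<forall>t. \<forall>i\<in>{1..lam}. \<forall>j\<in>{1..n}. distributed M lborel (xi t i j) std_normal_density"
begin

definition "Yf = (\<lambda>k. case k of Inl j \<Rightarrow> p0 j | Inr (t, i, j) \<Rightarrow> xi t i j)"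
definition "Iset = ({Inl j | j. j \<in> {1..n}} \<union> {Inr (t, i, j) | t i j. i \<in> {1..lam} \<and> j \<in> {1..n}})"
definition "restr A \<omega> = restrict (\<lambda>k. Yf k \<omega>) A"

lemma indep': "indep_vars (\<lambda>_. borel) Yf Iset"
  unfolding Yf_def Iset_def by (rule indep)

lemma Yf_meas: "k \<in> Iset \<Longrightarrow> Yf k \<in> borel_measurable M"
  using indep' unfolding indep_vars_def by auto

lemma restr_meas: "A \<subseteq> Iset \<Longrightarrow> (\<lambda>\<omega>. restr A \<omega>) \<in> measurable M (PiM A (\<lambda>_. borel))"
  unfolding restr_def by (intro measurable_restrict Yf_meas) auto

lemma fun_meas: "A \<subseteq> Iset \<Longrightarrow> F \<in> borel_measurable (PiM A (\<lambda>_. (borel :: real measure))) \<Longrightarrow>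
    (\<lambda>\<omega>. F (restr A \<omega>)) \<in> borel_measurable M"
  using measurable_compose[OF restr_meas] by blast

lemma indep_blk:
  assumes "A \<subseteq> Iset" "B \<subseteq> Iset" "A \<inter> B = {}"
    and F: "F \<in> borel_measurable (PiM A (\<lambda>_. (borel :: real measure)))"
    and G: "G \<in> borel_measurable (PiM B (\<lambda>_. (borel :: real measure)))"
  shows "indep_var borel (\<lambda>\<omega>. F (restr A \<omega>)) borel (\<lambda>\<omega>. G (restr B \<omega>))"
  using indep_var_compose[OF indep_var_restrict[OF indep' assms(3,1,2)] F G]
  unfolding restr_def comp_def .

lemma envof_Yf: "envof (\<lambda>j. p0 j \<omega>) (\<lambda>t i j. xi t i j \<omega>) = (\<lambda>k. Yf k \<omega>)"
  unfolding envof_def Yf_def by (auto split: sum.split prod.split)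

definition Lall :: "('a \<Rightarrow> real) \<Rightarrow> bool" where
  "Lall X \<longleftrightarrow> X \<in> borel_measurable M \<and> (\<forall>p. integrable M (\<lambda>\<omega>. \<bar>X \<omega>\<bar> ^ p))"

lemma Lall_meas: "Lall X \<Longrightarrow> X \<in> borel_measurable M"
  by (simp add: Lall_def)

lemma Lall_int: "Lall X \<Longrightarrow> integrable M X"
proof -
  assume a: "Lall X"
  have m: "X \<in> borel_measurable M" using a by (simp add: Lall_def)
  have "integrable M (\<lambda>\<omega>. \<bar>X \<omega>\<bar> ^ 1)" using a unfolding Lall_def by blast
  then have "integrable M (\<lambda>\<omega>. \<bar>X \<omega>\<bar>)" by simp
  then show ?thesis using integrable_abs_iff[OF m] by simp
qed

lemma Lall_dom:
  assumes "X \<in> borel_measurable M" "Lall Y" "\<And>\<omega>. \<bar>X \<omega>\<bar> \<le> \<bar>Y \<omega>\<bar>"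
  shows "Lall X"
  unfolding Lall_def
proof (intro conjI allI assms(1))
  fix p :: nat
  show "integrable M (\<lambda>\<omega>. \<bar>X \<omega>\<bar> ^ p)"
  proof (rule Bochner_Integration.integrable_bound)
    show "integrable M (\<lambda>\<omega>. \<bar>Y \<omega>\<bar> ^ p)" using assms(2) by (simp add: Lall_def)
    show "(\<lambda>\<omega>. \<bar>X \<omega>\<bar> ^ p) \<in> borel_measurable M" using assms(1) by measurable
    show "AE \<omega> in M. norm (\<bar>X \<omega>\<bar> ^ p) \<le> norm (\<bar>Y \<omega>\<bar> ^ p)"
      using assms(3) by (auto intro!: power_mono)
  qed
qed

lemma Lall_const: "Lall (\<lambda>_. a)"
  unfolding Lall_def by simp

lemma Lall_abs: "Lall X \<Longrightarrow> Lall (\<lambda>\<omega>. \<bar>X \<omega>\<bar>)"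
  by (rule Lall_dom[where Y=X]) (auto simp: Lall_def)

lemma Lall_add:
  assumes X: "Lall X" and Y: "Lall Y"
  shows "Lall (\<lambda>\<omega>. X \<omega> + Y \<omega>)"
  unfolding Lall_def
proof (intro conjI allI)
  have [measurable]: "X \<in> borel_measurable M" "Y \<in> borel_measurable M" using X Y by (auto simp: Lall_def)
  show "(\<lambda>\<omega>. X \<omega> + Y \<omega>) \<in> borel_measurable M" by measurable
  fix p :: nat
  show "integrable M (\<lambda>\<omega>. \<bar>X \<omega> + Y \<omega>\<bar> ^ p)"
  proof (rule Bochner_Integration.integrable_bound)
    show "integrable M (\<lambda>\<omega>. 2 ^ p * (\<bar>X \<omega>\<bar> ^ p + \<bar>Y \<omega>\<bar> ^ p))"
      using X Y by (auto simp: Lall_def)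
    show "(\<lambda>\<omega>. \<bar>X \<omega> + Y \<omega>\<bar> ^ p) \<in> borel_measurable M" by measurable
    show "AE \<omega> in M. norm (\<bar>X \<omega> + Y \<omega>\<bar> ^ p) \<le> norm (2 ^ p * (\<bar>X \<omega>\<bar> ^ p + \<bar>Y \<omega>\<bar> ^ p))"
      using pow_add_bound by auto
  qed
qed

lemma Lall_mult:
  assumes X: "Lall X" and Y: "Lall Y"
  shows "Lall (\<lambda>\<omega>. X \<omega> * Y \<omega>)"
  unfolding Lall_def
proof (intro conjI allI)
  have [measurable]: "X \<in> borel_measurable M" "Y \<in> borel_measurable M" using X Y by (auto simp: Lall_def)
  show "(\<lambda>\<omega>. X \<omega> * Y \<omega>) \<in> borel_measurable M" by measurable
  fix p :: nat
  show "integrable M (\<lambda>\<omega>. \<bar>X \<omega> * Y \<omega>\<bar> ^ p)"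
  proof (rule Bochner_Integration.integrable_bound)
    show "integrable M (\<lambda>\<omega>. \<bar>X \<omega>\<bar> ^ (2 * p) + \<bar>Y \<omega>\<bar> ^ (2 * p))"
      using X Y by (auto simp: Lall_def)
    show "(\<lambda>\<omega>. \<bar>X \<omega> * Y \<omega>\<bar> ^ p) \<in> borel_measurable M" by measurable
    show "AE \<omega> in M. norm (\<bar>X \<omega> * Y \<omega>\<bar> ^ p) \<le> norm (\<bar>X \<omega>\<bar> ^ (2 * p) + \<bar>Y \<omega>\<bar> ^ (2 * p))"
    proof (intro AE_I2)
      fix \<omega>
      have "\<bar>X \<omega> * Y \<omega>\<bar> ^ p = \<bar>X \<omega>\<bar> ^ p * \<bar>Y \<omega>\<bar> ^ p" by (simp add: abs_mult power_mult_distrib)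
      also have "\<dots> \<le> (\<bar>X \<omega>\<bar> ^ p) ^ 2 + (\<bar>Y \<omega>\<bar> ^ p) ^ 2" by (rule mult_sq_bound) auto
      also have "\<dots> = \<bar>X \<omega>\<bar> ^ (2 * p) + \<bar>Y \<omega>\<bar> ^ (2 * p)" by (simp add: power_mult[symmetric] mult.commute)
      finally show "norm (\<bar>X \<omega> * Y \<omega>\<bar> ^ p) \<le> norm (\<bar>X \<omega>\<bar> ^ (2 * p) + \<bar>Y \<omega>\<bar> ^ (2 * p))" by simp
    qed
  qed
qed

lemma Lall_cmult: "Lall X \<Longrightarrow> Lall (\<lambda>\<omega>. a * X \<omega>)"
  using Lall_mult[OF Lall_const] .

lemma Lall_diff: "Lall X \<Longrightarrow> Lall Y \<Longrightarrow> Lall (\<lambda>\<omega>. X \<omega> - Y \<omega>)"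
  using Lall_add[of X "\<lambda>\<omega>. (-1) * Y \<omega>"] Lall_cmult[of Y "-1"] by simp

lemma Lall_power: "Lall X \<Longrightarrow> Lall (\<lambda>\<omega>. X \<omega> ^ k)"
  by (induction k) (auto intro: Lall_const Lall_mult)

lemma Lall_sum: "(\<And>i. i \<in> S \<Longrightarrow> Lall (X i)) \<Longrightarrow> Lall (\<lambda>\<omega>. \<Sum>i\<in>S. X i \<omega>)"
proof (induction S rule: infinite_finite_induct)
  case (infinite A) then show ?case by (simp add: Lall_const)
next
  case empty then show ?case by (simp add: Lall_const)
next
  case (insert x F) then show ?case by (simp add: Lall_add)
qed

lemma Lall_std:
  assumes D: "distributed M lborel X std_normal_density"
  shows "Lall X"
  unfolding Lall_def
proof (intro conjI allI)
  show "X \<in> borel_measurable M" using distributed_measurable[OF D] by simp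
  fix p :: nat
  have "integrable lborel (\<lambda>x. std_normal_density x * \<bar>x\<bar> ^ p) \<longleftrightarrow> integrable M (\<lambda>x. \<bar>X x\<bar> ^ p)"
    by (rule distributed_integrable[OF D]) auto
  then show "integrable M (\<lambda>\<omega>. \<bar>X \<omega>\<bar> ^ p)" using integrable_std_normal_moment_abs by simp
qed

definition "Zf j t \<omega> = Pe lam c (\<lambda>k. Yf k \<omega>) t j"
definition "etaf j t \<omega> = etae lam (\<lambda>k. Yf k \<omega>) t j"

lemma Bef_sub: "j \<in> {1..n} \<Longrightarrow> Bef lam j t \<subseteq> Iset"
  using n1 unfolding Bef_def Iset_def by auto

lemma Blk_sub: "j \<in> {1..n} \<Longrightarrow> Blk lam j t \<subseteq> Iset"
  using n1 unfolding Blk_def Iset_def by auto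

lemma Bef_Blk_disj: "Bef lam j t \<inter> Blk lam j t = {}"
  unfolding Bef_def Blk_def by auto

lemma restr_in: "k \<in> A \<Longrightarrow> restr A \<omega> k = Yf k \<omega>"
  by (simp add: restr_def)

lemma Zf_restr: "i \<le> t \<Longrightarrow> Zf j i \<omega> = Pe lam c (restr (Bef lam j t) \<omega>) i j"
  unfolding Zf_def
  by (rule Pe_cong) (use Bef_mono[of i t lam j] in \<open>auto simp: restr_in\<close>)

lemma etaf_restr: "etaf j s \<omega> = etae lam (restr (Blk lam j s) \<omega>) s j"
  unfolding etaf_def
  by (rule etae_cong) (auto simp: restr_in Blk_def)

lemma Zf_meas: "j \<in> {1..n} \<Longrightarrow> Zf j t \<in> borel_measurable M"
proof -
  assume j: "j \<in> {1..n}"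
  have "Zf j t = (\<lambda>\<omega>. Pe lam c (restr (Bef lam j t) \<omega>) t j)" using Zf_restr[of t t j] by auto
  then show ?thesis using fun_meas[OF Bef_sub[OF j] Pe_meas] by simp
qed

lemma etaf_meas: "j \<in> {1..n} \<Longrightarrow> etaf j t \<in> borel_measurable M"
proof -
  assume j: "j \<in> {1..n}"
  have "etaf j t = (\<lambda>\<omega>. etae lam (restr (Blk lam j t) \<omega>) t j)" using etaf_restr[of j t] by auto
  then show ?thesis using fun_meas[OF Blk_sub[OF j] etae_meas] by simp
qed

lemma Yf_xi: "Yf (Inr (t, i, j)) = xi t i j" and Yf_p0: "Yf (Inl j) = p0 j"
  by (simp_all add: Yf_def)

lemma Lall_xi: "i \<in> {1..lam} \<Longrightarrow> j \<in> {1..n} \<Longrightarrow> Lall (xi t i j)"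
  using Lall_std xid by blast

lemma Lall_p0: "j \<in> {1..n} \<Longrightarrow> Lall (p0 j)"
  using Lall_std p0d by blast

lemma etaf_sum: "etaf j t \<omega> = (\<Sum>l\<in>{1..lam}. if selp lam (\<lambda>i. xi t i 1 \<omega>) l then xi t l j \<omega> else 0)"
  unfolding etaf_def etae_def Yf_def by (simp cong: if_cong)

lemma Lall_etaf: "j \<in> {1..n} \<Longrightarrow> Lall (etaf j t)"
proof -
  assume j: "j \<in> {1..n}"
  show ?thesis
  proof (rule Lall_dom[OF etaf_meas[OF j]])
    show "Lall (\<lambda>\<omega>. \<Sum>l\<in>{1..lam}. \<bar>xi t l j \<omega>\<bar>)"
      by (intro Lall_sum Lall_abs Lall_xi j) auto
    fix \<omega>
    have "\<bar>etaf j t \<omega>\<bar> \<le> (\<Sum>l\<in>{1..lam}. \<bar>if selp lam (\<lambda>i. xi t i 1 \<omega>) l then xi t l j \<omega> else 0\<bar>)"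
      unfolding etaf_sum by (rule sum_abs)
    also have "\<dots> \<le> (\<Sum>l\<in>{1..lam}. \<bar>xi t l j \<omega>\<bar>)"
      by (intro sum_mono) auto
    also have "\<dots> \<le> \<bar>\<Sum>l\<in>{1..lam}. \<bar>xi t l j \<omega>\<bar>\<bar>" by simp
    finally show "\<bar>etaf j t \<omega>\<bar> \<le> \<bar>\<Sum>l\<in>{1..lam}. \<bar>xi t l j \<omega>\<bar>\<bar>" .
  qed
qed

lemma Zf_0: "Zf j 0 = p0 j"
  by (simp add: Zf_def Yf_p0 fun_eq_iff)

lemma Zf_Suc: "Zf j (Suc t) \<omega> = (1 - c) * Zf j t \<omega> + sqrt (c * (2 - c)) * etaf j t \<omega>"
  by (simp add: Zf_def etaf_def)

lemma Lall_Zf: "j \<in> {1..n} \<Longrightarrow> Lall (Zf j t)"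
proof (induction t)
  case 0 then show ?case by (simp add: Zf_0 Lall_p0)
next
  case (Suc t)
  have "Lall (\<lambda>\<omega>. (1 - c) * Zf j t \<omega> + sqrt (c * (2 - c)) * etaf j t \<omega>)"
    by (intro Lall_add Lall_cmult Suc Lall_etaf) (use Suc in auto)?
  then show ?case by (simp add: Zf_Suc[abs_def])
qed

definition mom :: "nat \<Rightarrow> real" where "mom q = (\<integral>x. std_normal_density x * x ^ q \<partial>lborel)"

lemma mom_0: "mom 0 = 1"
  using integral_std_normal_moment_even[of 0] by (simp add: mom_def)
lemma mom_1: "mom 1 = 0"
  using integral_std_normal_moment_odd[of 0] by (simp add: mom_def)
lemma mom_1': "mom (Suc 0) = 0"
  using mom_1 by simp
lemma mom_2: "mom 2 = 1"
  using integral_std_normal_moment_even[of 1] by (simp add: mom_def)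
lemma mom_3: "mom 3 = 0"
  using integral_std_normal_moment_odd[of 1] by (simp add: mom_def numeral_eq_Suc)
lemma mom_4: "mom 4 = 3"
proof -
  have "fact (2 * 2) / (2 ^ 2 * fact 2) = (3::real)" by (simp add: fact_numeral)
  then show ?thesis using integral_std_normal_moment_even[of 2] by (simp add: mom_def)
qed

lemma E_xi_pow: "i \<in> {1..lam} \<Longrightarrow> j \<in> {1..n} \<Longrightarrow> (\<integral>\<omega>. xi t i j \<omega> ^ q \<partial>M) = mom q"
proof -
  assume "i \<in> {1..lam}" "j \<in> {1..n}"
  then have D: "distributed M lborel (xi t i j) std_normal_density" using xid by blast
  show ?thesis unfolding mom_def
    by (rule distributed_integral[OF D, of "\<lambda>x. x ^ q", symmetric]) auto
qed

lemma Lall_bounded: "X \<in> borel_measurable M \<Longrightarrow> (\<And>\<omega>. \<bar>X \<omega>\<bar> \<le> B) \<Longrightarrow> Lall X"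
proof -
  assume m: "X \<in> borel_measurable M" and b: "\<And>\<omega>. \<bar>X \<omega>\<bar> \<le> B"
  show ?thesis
  proof (rule Lall_dom[where Y="\<lambda>_. B", OF m Lall_const])
    fix \<omega> show "\<bar>X \<omega>\<bar> \<le> \<bar>B\<bar>" using b[of \<omega>] by linarith
  qed
qed

lemma E_eta_pow:
  assumes j: "j \<in> {2..n}"
  shows "(\<integral>\<omega>. etaf j t \<omega> ^ q \<partial>M) = mom q"
proof -
  have j1: "j \<in> {1..n}" and jn1: "j \<noteq> 1" using j by auto
  define ind where "ind l \<omega> = (if selp lam (\<lambda>i. xi t i 1 \<omega>) l then 1 else (0::real))" for l \<omega>
  define A :: "(nat + nat \<times> nat \<times> nat) set" where "A = {Inr (t, i, 1) | i. i \<in> {1..lam}}"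
  have A: "A \<subseteq> Iset" using n1 by (auto simp: A_def Iset_def)
  define F where "F l e = (if selp lam (\<lambda>i. e (Inr (t, i, 1))) l then 1 else (0::real))" for l and e :: "nat + nat \<times> nat \<times> nat \<Rightarrow> real"
  have Fm: "F l \<in> borel_measurable (PiM A (\<lambda>_. (borel :: real measure)))" for l
    unfolding F_def by (intro measurable_If measurable_const selp_meas[unfolded pred_def]) auto
  have indF: "ind l \<omega> = F l (restr A \<omega>)" if l: "l \<in> {1..lam}" for l \<omega>
  proof -
    have "selp lam (\<lambda>i. xi t i 1 \<omega>) l = selp lam (\<lambda>i. restr A \<omega> (Inr (t, i, 1))) l"
      by (rule selp_cong[OF _ l]) (auto simp: restr_in A_def Yf_xi)
    then show ?thesis by (simp add: ind_def F_def)
  qed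
  have indm: "ind l \<in> borel_measurable M" if "l \<in> {1..lam}" for l
  proof -
    have "ind l = (\<lambda>\<omega>. F l (restr A \<omega>))" using indF[OF that] by auto
    then show ?thesis using fun_meas[OF A Fm] by simp
  qed
  have Lind: "Lall (ind l)" if "l \<in> {1..lam}" for l
    by (rule Lall_bounded[OF indm[OF that], of 1]) (auto simp: ind_def)
  have Lxq: "Lall (\<lambda>\<omega>. xi t l j \<omega> ^ q)" if "l \<in> {1..lam}" for l
    by (intro Lall_power Lall_xi that j1)
  have pw: "etaf j t \<omega> ^ q = (\<Sum>l\<in>{1..lam}. ind l \<omega> * xi t l j \<omega> ^ q)" for \<omega>
  proof -
    obtain l0 where l0: "selp lam (\<lambda>i. xi t i 1 \<omega>) l0" using selp_exists[OF lam1] by blast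
    have "etaf j t \<omega> = xi t l0 j \<omega>" unfolding etaf_sum by (rule sum_selp[OF l0])
    moreover have "(\<Sum>l\<in>{1..lam}. ind l \<omega> * xi t l j \<omega> ^ q) = (\<Sum>l\<in>{1..lam}. if selp lam (\<lambda>i. xi t i 1 \<omega>) l then xi t l j \<omega> ^ q else 0)"
      by (intro sum.cong) (auto simp: ind_def)
    moreover have "\<dots> = xi t l0 j \<omega> ^ q" by (rule sum_selp[OF l0])
    ultimately show ?thesis by simp
  qed
  have indsum: "(\<Sum>l\<in>{1..lam}. ind l \<omega>) = 1" for \<omega>
  proof -
    obtain l0 where l0: "selp lam (\<lambda>i. xi t i 1 \<omega>) l0" using selp_exists[OF lam1] by blast
    have "(\<Sum>l\<in>{1..lam}. ind l \<omega>) = (\<Sum>l\<in>{1..lam}. if selp lam (\<lambda>i. xi t i 1 \<omega>) l then 1 else 0)"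
      by (simp add: ind_def)
    also have "\<dots> = 1" by (rule sum_selp[OF l0])
    finally show ?thesis .
  qed
  have prod: "(\<integral>\<omega>. ind l \<omega> * xi t l j \<omega> ^ q \<partial>M) = (\<integral>\<omega>. ind l \<omega> \<partial>M) * mom q" if l: "l \<in> {1..lam}" for l
  proof -
    define B :: "(nat + nat \<times> nat \<times> nat) set" where "B = {Inr (t, l, j)}"
    have B: "B \<subseteq> Iset" using l j1 by (auto simp: B_def Iset_def)
    have AB: "A \<inter> B = {}" using jn1 by (auto simp: A_def B_def)
    define G where "G e = e (Inr (t, l, j)) ^ q" for e :: "nat + nat \<times> nat \<times> nat \<Rightarrow> real"
    have Gm: "G \<in> borel_measurable (PiM B (\<lambda>_. (borel :: real measure)))"
      unfolding G_def by (intro borel_measurable_power comp_meas_any)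
    have ind: "indep_var borel (\<lambda>\<omega>. F l (restr A \<omega>)) borel (\<lambda>\<omega>. G (restr B \<omega>))"
      by (rule indep_blk[OF A B AB Fm Gm])
    have e1: "(\<lambda>\<omega>. F l (restr A \<omega>)) = ind l" using indF[OF l] by auto
    have e2: "(\<lambda>\<omega>. G (restr B \<omega>)) = (\<lambda>\<omega>. xi t l j \<omega> ^ q)"
      by (auto simp: G_def restr_in B_def Yf_xi)
    have "(\<integral>\<omega>. ind l \<omega> * xi t l j \<omega> ^ q \<partial>M) = (\<integral>\<omega>. ind l \<omega> \<partial>M) * (\<integral>\<omega>. xi t l j \<omega> ^ q \<partial>M)"
      using indep_var_lebesgue_integral[OF ind[unfolded e1 e2] Lall_int[OF Lind[OF l]] Lall_int[OF Lxq[OF l]]] .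
    then show ?thesis using E_xi_pow[OF l j1] by simp
  qed
  have "(\<integral>\<omega>. etaf j t \<omega> ^ q \<partial>M) = (\<integral>\<omega>. (\<Sum>l\<in>{1..lam}. ind l \<omega> * xi t l j \<omega> ^ q) \<partial>M)"
    by (simp add: pw)
  also have "\<dots> = (\<Sum>l\<in>{1..lam}. (\<integral>\<omega>. ind l \<omega> * xi t l j \<omega> ^ q \<partial>M))"
    by (rule Bochner_Integration.integral_sum) (intro Lall_int Lall_mult Lind Lxq, auto)
  also have "\<dots> = (\<Sum>l\<in>{1..lam}. (\<integral>\<omega>. ind l \<omega> \<partial>M)) * mom q"
    by (simp add: prod sum_distrib_right)
  also have "(\<Sum>l\<in>{1..lam}. (\<integral>\<omega>. ind l \<omega> \<partial>M)) = (\<integral>\<omega>. (\<Sum>l\<in>{1..lam}. ind l \<omega>) \<partial>M)"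
    by (rule Bochner_Integration.integral_sum[symmetric]) (intro Lall_int Lind, auto)
  also have "\<dots> = 1" unfolding indsum by (simp add: prob_space)
  finally show ?thesis by simp
qed

lemma indep_past:
  assumes j: "j \<in> {1..n}" and F: "F \<in> borel_measurable (PiM (Bef lam j t) (\<lambda>_. (borel :: real measure)))"
  shows "indep_var borel (\<lambda>\<omega>. F (restr (Bef lam j t) \<omega>)) borel (\<lambda>\<omega>. etaf j t \<omega> ^ q)"
proof -
  have Gm: "(\<lambda>e. etae lam e t j ^ q) \<in> borel_measurable (PiM (Blk lam j t) (\<lambda>_. (borel :: real measure)))"
    by (intro borel_measurable_power etae_meas)
  have "(\<lambda>\<omega>. etaf j t \<omega> ^ q) = (\<lambda>\<omega>. etae lam (restr (Blk lam j t) \<omega>) t j ^ q)"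
    by (simp add: etaf_restr)
  then show ?thesis
    using indep_blk[OF Bef_sub[OF j] Blk_sub[OF j] Bef_Blk_disj F Gm] by simp
qed

lemma E_past:
  assumes j: "j \<in> {2..n}" and F: "F \<in> borel_measurable (PiM (Bef lam j t) (\<lambda>_. (borel :: real measure)))"
    and L: "Lall (\<lambda>\<omega>. F (restr (Bef lam j t) \<omega>))"
  shows "(\<integral>\<omega>. F (restr (Bef lam j t) \<omega>) * etaf j t \<omega> ^ q \<partial>M) = (\<integral>\<omega>. F (restr (Bef lam j t) \<omega>) \<partial>M) * mom q"
proof -
  have j1: "j \<in> {1..n}" using j by auto
  show ?thesis
    using indep_var_lebesgue_integral[OF indep_past[OF j1 F] Lall_int[OF L] Lall_int[OF Lall_power[OF Lall_etaf[OF j1]]]]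
    E_eta_pow[OF j] by simp
qed

lemma ab_sq: "(1 - c) ^ 2 + sqrt (c * (2 - c)) ^ 2 = 1"
proof -
  have "c * (2 - c) \<ge> 0" using c0 c1 by simp
  then have "sqrt (c * (2 - c)) ^ 2 = c * (2 - c)" by simp
  then show ?thesis by (simp add: power2_eq_square algebra_simps)
qed

lemma Zf_restr_self: "Zf j t \<omega> = Pe lam c (restr (Bef lam j t) \<omega>) t j"
  using Zf_restr[of t t] by simp

lemma E_X_Zsuc:
  assumes j: "j \<in> {2..n}" and F: "F \<in> borel_measurable (PiM (Bef lam j t) (\<lambda>_. (borel :: real measure)))"
    and L: "Lall (\<lambda>\<omega>. F (restr (Bef lam j t) \<omega>))"
  shows "(\<integral>\<omega>. F (restr (Bef lam j t) \<omega>) * Zf j (Suc t) \<omega> ^ m \<partial>M) =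
     (\<Sum>i\<le>m. real (m choose i) * (1 - c) ^ i * sqrt (c * (2 - c)) ^ (m - i) *
        (\<integral>\<omega>. F (restr (Bef lam j t) \<omega>) * Zf j t \<omega> ^ i \<partial>M) * mom (m - i))"
proof -
  have j1: "j \<in> {1..n}" using j by auto
  define a where "a = 1 - c"
  define b where "b = sqrt (c * (2 - c))"
  define X where "X \<omega> = F (restr (Bef lam j t) \<omega>)" for \<omega>
  have pw: "X \<omega> * Zf j (Suc t) \<omega> ^ m = (\<Sum>i\<le>m. (real (m choose i) * a ^ i * b ^ (m - i)) * ((X \<omega> * Zf j t \<omega> ^ i) * etaf j t \<omega> ^ (m - i)))" for \<omega>
  proof -
    have "Zf j (Suc t) \<omega> ^ m = (a * Zf j t \<omega> + b * etaf j t \<omega>) ^ m" by (simp add: Zf_Suc a_def b_def)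
    also have "\<dots> = (\<Sum>i\<le>m. real (m choose i) * (a * Zf j t \<omega>) ^ i * (b * etaf j t \<omega>) ^ (m - i))"
      by (rule binomial_ring)
    finally show ?thesis
      by (simp add: sum_distrib_left power_mult_distrib algebra_simps)
  qed
  have LX: "Lall X" using L by (simp add: X_def[abs_def])
  have Lterm: "Lall (\<lambda>\<omega>. (X \<omega> * Zf j t \<omega> ^ i) * etaf j t \<omega> ^ (m - i))" for i
    by (intro Lall_mult Lall_power LX Lall_Zf Lall_etaf j1)
  have each: "(\<integral>\<omega>. (X \<omega> * Zf j t \<omega> ^ i) * etaf j t \<omega> ^ (m - i) \<partial>M) = (\<integral>\<omega>. X \<omega> * Zf j t \<omega> ^ i \<partial>M) * mom (m - i)" for i
  proof -
    define F' where "F' e = F e * Pe lam c e t j ^ i" for e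
    have F'm: "F' \<in> borel_measurable (PiM (Bef lam j t) (\<lambda>_. (borel :: real measure)))"
      unfolding F'_def by (intro borel_measurable_times borel_measurable_power F Pe_meas)
    have eq: "F' (restr (Bef lam j t) \<omega>) = X \<omega> * Zf j t \<omega> ^ i" for \<omega>
      by (simp add: F'_def X_def Zf_restr_self)
    have L': "Lall (\<lambda>\<omega>. F' (restr (Bef lam j t) \<omega>))"
      unfolding eq by (intro Lall_mult Lall_power LX Lall_Zf j1)
    show ?thesis using E_past[OF j F'm L', of "m - i"] unfolding eq .
  qed
  have "(\<integral>\<omega>. X \<omega> * Zf j (Suc t) \<omega> ^ m \<partial>M) =
     (\<integral>\<omega>. (\<Sum>i\<le>m. (real (m choose i) * a ^ i * b ^ (m - i)) * ((X \<omega> * Zf j t \<omega> ^ i) * etaf j t \<omega> ^ (m - i))) \<partial>M)"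
    unfolding pw ..
  also have "\<dots> = (\<Sum>i\<le>m. (\<integral>\<omega>. (real (m choose i) * a ^ i * b ^ (m - i)) * ((X \<omega> * Zf j t \<omega> ^ i) * etaf j t \<omega> ^ (m - i)) \<partial>M))"
    by (rule Bochner_Integration.integral_sum) (intro Bochner_Integration.integrable_mult_right Lall_int Lterm)
  also have "\<dots> = (\<Sum>i\<le>m. (real (m choose i) * a ^ i * b ^ (m - i)) * ((\<integral>\<omega>. X \<omega> * Zf j t \<omega> ^ i \<partial>M) * mom (m - i)))"
    by (simp only: Bochner_Integration.integral_mult_right_zero each)
  finally show ?thesis unfolding X_def a_def b_def by (simp add: algebra_simps)
qed

lemma E_Zsuc:
  assumes j: "j \<in> {2..n}"
  shows "(\<integral>\<omega>. Zf j (Suc t) \<omega> ^ m \<partial>M) =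
     (\<Sum>i\<le>m. real (m choose i) * (1 - c) ^ i * sqrt (c * (2 - c)) ^ (m - i) *
        (\<integral>\<omega>. Zf j t \<omega> ^ i \<partial>M) * mom (m - i))"
  using E_X_Zsuc[OF j, of "\<lambda>_. 1" t m] by (simp add: Lall_const)

lemma sum2: "(\<Sum>i\<le>(2::nat). f i) = f 0 + f 1 + f 2" for f :: "nat \<Rightarrow> real"
  by (simp add: numeral_eq_Suc)
lemma sum1: "(\<Sum>i\<le>(1::nat). f i) = f 0 + f 1" for f :: "nat \<Rightarrow> real"
  by simp
lemma sum4: "(\<Sum>i\<le>(4::nat). f i) = f 0 + f 1 + f 2 + f 3 + f 4" for f :: "nat \<Rightarrow> real"
  by (simp add: numeral_eq_Suc)
lemma choose_vals: "(2::nat) choose 1 = 2" "(4::nat) choose 1 = 4" "(4::nat) choose 2 = 6" "(4::nat) choose 3 = 4"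
  by (simp_all add: numeral_eq_Suc)

lemma E_p0_pow: "j \<in> {1..n} \<Longrightarrow> (\<integral>\<omega>. p0 j \<omega> ^ q \<partial>M) = mom q"
proof -
  assume "j \<in> {1..n}"
  then have D: "distributed M lborel (p0 j) std_normal_density" using p0d by blast
  show ?thesis unfolding mom_def
    by (rule distributed_integral[OF D, of "\<lambda>x. x ^ q", symmetric]) auto
qed

lemma Z_moments:
  assumes j: "j \<in> {2..n}"
  shows "(\<integral>\<omega>. Zf j t \<omega> \<partial>M) = 0 \<and> (\<integral>\<omega>. Zf j t \<omega> ^ 2 \<partial>M) = 1 \<and> (\<integral>\<omega>. Zf j t \<omega> ^ 4 \<partial>M) \<le> 3"
proof (induction t)
  case 0
  have j1: "j \<in> {1..n}" using j by auto
  show ?case using E_p0_pow[OF j1, of 1] E_p0_pow[OF j1, of 2] E_p0_pow[OF j1, of 4]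
    by (simp add: Zf_0 mom_1' mom_2 mom_4)
next
  case (Suc t)
  define a where "a = 1 - c"
  define b where "b = sqrt (c * (2 - c))"
  have ab: "a ^ 2 + b ^ 2 = 1" using ab_sq by (simp add: a_def b_def)
  have E0: "(\<integral>\<omega>. Zf j t \<omega> ^ 0 \<partial>M) = 1" by (simp add: prob_space)
  have I1: "(\<integral>\<omega>. Zf j t \<omega> ^ 1 \<partial>M) = 0" using Suc by simp
  have I2: "(\<integral>\<omega>. Zf j t \<omega> ^ 2 \<partial>M) = 1" using Suc by simp
  have I4: "(\<integral>\<omega>. Zf j t \<omega> ^ 4 \<partial>M) \<le> 3" using Suc by simp
  have e1: "(\<integral>\<omega>. Zf j (Suc t) \<omega> ^ 1 \<partial>M) = 0"
    unfolding E_Zsuc[OF j, of t 1] sum1 using E0 I1 by (simp add: mom_0 mom_1 mom_1')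
  have e2: "(\<integral>\<omega>. Zf j (Suc t) \<omega> ^ 2 \<partial>M) = a ^ 2 + b ^ 2"
    unfolding E_Zsuc[OF j, of t 2] sum2 using E0 I1 I2 by (simp add: mom_0 mom_1 mom_1' mom_2 choose_vals a_def b_def)
  have e4: "(\<integral>\<omega>. Zf j (Suc t) \<omega> ^ 4 \<partial>M) = b ^ 4 * 3 + 6 * a ^ 2 * b ^ 2 + a ^ 4 * (\<integral>\<omega>. Zf j t \<omega> ^ 4 \<partial>M)"
    unfolding E_Zsuc[OF j, of t 4] sum4 using E0 I1 I2 by (simp add: mom_0 mom_1 mom_1' mom_2 mom_3 mom_4 choose_vals a_def b_def)
  have "a ^ 4 * (\<integral>\<omega>. Zf j t \<omega> ^ 4 \<partial>M) \<le> a ^ 4 * 3"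
    using I4 by (intro mult_left_mono) auto
  then have "(\<integral>\<omega>. Zf j (Suc t) \<omega> ^ 4 \<partial>M) \<le> 3 * (a ^ 2 + b ^ 2) ^ 2"
  proof -
    have "3 * (a ^ 2 + b ^ 2) ^ 2 = a ^ 4 * 3 + 6 * a ^ 2 * b ^ 2 + b ^ 4 * 3"
      by (simp add: eval_nat_numeral algebra_simps)
    then show ?thesis unfolding e4 using \<open>a ^ 4 * (\<integral>\<omega>. Zf j t \<omega> ^ 4 \<partial>M) \<le> a ^ 4 * 3\<close> by linarith
  qed
  then show ?case using e1 e2 ab by simp
qed

definition "Sf j t \<omega> = (\<Sum>i\<in>{1..t}. Zf j i \<omega> ^ 2)"
definition "Tf j t \<omega> = Sf j t \<omega> - real t"

lemma Lall_Sf: "j \<in> {1..n} \<Longrightarrow> Lall (Sf j t)"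
  unfolding Sf_def[abs_def] by (intro Lall_sum Lall_power Lall_Zf)

lemma Lall_Tf: "j \<in> {1..n} \<Longrightarrow> Lall (Tf j t)"
  unfolding Tf_def[abs_def] by (intro Lall_diff Lall_Sf Lall_const)

lemma Tf_restr: "Tf j t \<omega> = (\<lambda>e. (\<Sum>i\<in>{1..t}. Pe lam c e i j ^ 2) - real t) (restr (Bef lam j t) \<omega>)"
  unfolding Tf_def Sf_def by (auto simp: Zf_restr intro!: sum.cong)

lemma Tf_F_meas: "(\<lambda>e. (\<Sum>i\<in>{1..t}. Pe lam c e i j ^ 2) - real t) \<in> borel_measurable (PiM A (\<lambda>_. (borel :: real measure)))"
  by (intro borel_measurable_diff borel_measurable_sum borel_measurable_power Pe_meas measurable_const) simp_all

lemma E_Zsq: "j \<in> {2..n} \<Longrightarrow> (\<integral>\<omega>. Zf j t \<omega> ^ 2 \<partial>M) = 1"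
  using Z_moments by blast

lemma E_Z4: "j \<in> {2..n} \<Longrightarrow> (\<integral>\<omega>. Zf j t \<omega> ^ 4 \<partial>M) \<le> 3"
  using Z_moments by blast

lemma E_Tf: assumes j: "j \<in> {2..n}" shows "(\<integral>\<omega>. Tf j t \<omega> \<partial>M) = 0"
proof -
  have j1: "j \<in> {1..n}" using j by auto
  have "(\<integral>\<omega>. Tf j t \<omega> \<partial>M) = (\<integral>\<omega>. Sf j t \<omega> \<partial>M) - (\<integral>\<omega>. real t \<partial>M)"
    unfolding Tf_def by (rule Bochner_Integration.integral_diff) (intro Lall_int Lall_Sf j1, simp)
  also have "(\<integral>\<omega>. Sf j t \<omega> \<partial>M) = (\<Sum>i\<in>{1..t}. (\<integral>\<omega>. Zf j i \<omega> ^ 2 \<partial>M))"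
    unfolding Sf_def by (rule Bochner_Integration.integral_sum) (intro Lall_int Lall_power Lall_Zf j1)
  also have "\<dots> = real t" using E_Zsq[OF j] by simp
  finally show ?thesis by (simp add: prob_space)
qed

lemma H_eq:
  assumes j: "j \<in> {2..n}"
  shows "(\<integral>\<omega>. Tf j t \<omega> * Zf j (Suc t) \<omega> ^ 2 \<partial>M) = (1 - c) ^ 2 * (\<integral>\<omega>. Tf j t \<omega> * Zf j t \<omega> ^ 2 \<partial>M)"
proof -
  have j1: "j \<in> {1..n}" using j by auto
  have L: "Lall (\<lambda>\<omega>. (\<lambda>e. (\<Sum>i\<in>{1..t}. Pe lam c e i j ^ 2) - real t) (restr (Bef lam j t) \<omega>))"
    unfolding Tf_restr[symmetric] using Lall_Tf[OF j1] by (simp add: Tf_def[abs_def])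
  have "(\<integral>\<omega>. Tf j t \<omega> * Zf j (Suc t) \<omega> ^ 2 \<partial>M) =
     (\<Sum>i\<le>2. real (2 choose i) * (1 - c) ^ i * sqrt (c * (2 - c)) ^ (2 - i) *
        (\<integral>\<omega>. Tf j t \<omega> * Zf j t \<omega> ^ i \<partial>M) * mom (2 - i))"
    using E_X_Zsuc[OF j Tf_F_meas L, of 2] unfolding Tf_restr[symmetric] .
  also have "\<dots> = (1 - c) ^ 2 * (\<integral>\<omega>. Tf j t \<omega> * Zf j t \<omega> ^ 2 \<partial>M)"
    unfolding sum2 using E_Tf[OF j, of t] by (simp add: mom_0 mom_1 mom_1' mom_2 choose_vals)
  finally show ?thesis .
qed

definition "Gf j t = (\<integral>\<omega>. Tf j t \<omega> * Zf j t \<omega> ^ 2 \<partial>M)"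

lemma Tf_0: "Tf j 0 \<omega> = 0"
  by (simp add: Tf_def Sf_def)

lemma Tf_Suc: "Tf j (Suc t) \<omega> = Tf j t \<omega> + (Zf j (Suc t) \<omega> ^ 2 - 1)"
  by (simp add: Tf_def Sf_def)

lemma G_bound:
  assumes j: "j \<in> {2..n}"
  shows "Gf j t \<le> 2 / (1 - (1 - c) ^ 2)"
proof (induction t)
  case 0 then show ?case using c0 c1 by (simp add: Gf_def Tf_0 field_simps power2_eq_square)
next
  case (Suc t)
  have j1: "j \<in> {1..n}" using j by auto
  define q where "q = (1 - c) ^ 2"
  have q0: "0 \<le> q" using c0 c1 by (auto simp: q_def)
  have "(1 - c) ^ 2 < 1 ^ 2" by (rule power_strict_mono) (use c0 c1 in auto)
  then have q1: "q < 1" by (simp add: q_def)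
  have "Gf j (Suc t) = (\<integral>\<omega>. Tf j t \<omega> * Zf j (Suc t) \<omega> ^ 2 + (Zf j (Suc t) \<omega> ^ 4 - Zf j (Suc t) \<omega> ^ 2) \<partial>M)"
    unfolding Gf_def Tf_Suc by (intro Bochner_Integration.integral_cong) (simp_all add: algebra_simps eval_nat_numeral)
  also have "\<dots> = (\<integral>\<omega>. Tf j t \<omega> * Zf j (Suc t) \<omega> ^ 2 \<partial>M) + ((\<integral>\<omega>. Zf j (Suc t) \<omega> ^ 4 \<partial>M) - (\<integral>\<omega>. Zf j (Suc t) \<omega> ^ 2 \<partial>M))"
    by (subst Bochner_Integration.integral_add, (intro Lall_int Lall_mult Lall_diff Lall_power Lall_Tf Lall_Zf j1)+,
        subst Bochner_Integration.integral_diff, (intro Lall_int Lall_power Lall_Zf j1)+, rule refl)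
  also have "\<dots> \<le> q * Gf j t + 2"
    using H_eq[OF j, of t] E_Z4[OF j, of "Suc t"] E_Zsq[OF j, of "Suc t"] by (simp add: Gf_def q_def)
  also have "\<dots> \<le> q * (2 / (1 - q)) + 2"
  proof -
    have "q * Gf j t \<le> q * (2 / (1 - q))" using mult_left_mono[OF Suc q0] by (simp add: q_def)
    then show ?thesis by linarith
  qed
  also have "\<dots> = 2 / (1 - q)" using q1 by (simp add: field_simps)
  finally show ?case by (simp add: q_def)
qed

definition "Vf j t = (\<integral>\<omega>. Tf j t \<omega> ^ 2 \<partial>M)"

lemma V_bound:
  assumes j: "j \<in> {2..n}"
  shows "Vf j t \<le> (2 * (1 - c) ^ 2 * (2 / (1 - (1 - c) ^ 2)) + 2) * real t"
proof (induction t)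
  case 0 then show ?case by (simp add: Vf_def Tf_0)
next
  case (Suc t)
  have j1: "j \<in> {1..n}" using j by auto
  define q where "q = (1 - c) ^ 2"
  have q0: "0 \<le> q" using c0 c1 by (auto simp: q_def)
  have "Vf j (Suc t) = (\<integral>\<omega>. Tf j t \<omega> ^ 2 + 2 * (Tf j t \<omega> * Zf j (Suc t) \<omega> ^ 2) - 2 * Tf j t \<omega> + (Zf j (Suc t) \<omega> ^ 4 - 2 * Zf j (Suc t) \<omega> ^ 2 + 1) \<partial>M)"
    unfolding Vf_def Tf_Suc by (intro Bochner_Integration.integral_cong) (simp_all add: algebra_simps eval_nat_numeral)
  also have "\<dots> = Vf j t + 2 * (\<integral>\<omega>. Tf j t \<omega> * Zf j (Suc t) \<omega> ^ 2 \<partial>M) - 2 * (\<integral>\<omega>. Tf j t \<omega> \<partial>M)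
      + ((\<integral>\<omega>. Zf j (Suc t) \<omega> ^ 4 \<partial>M) - 2 * (\<integral>\<omega>. Zf j (Suc t) \<omega> ^ 2 \<partial>M) + 1)"
  proof -
    have i1: "integrable M (\<lambda>\<omega>. Tf j t \<omega> ^ 2)" by (intro Lall_int Lall_power Lall_Tf j1)
    have i2: "integrable M (\<lambda>\<omega>. Tf j t \<omega> * Zf j (Suc t) \<omega> ^ 2)" by (intro Lall_int Lall_mult Lall_power Lall_Tf Lall_Zf j1)
    have i3: "integrable M (\<lambda>\<omega>. Tf j t \<omega>)" by (intro Lall_int Lall_Tf j1)
    have i4: "integrable M (\<lambda>\<omega>. Zf j (Suc t) \<omega> ^ 4)" by (intro Lall_int Lall_power Lall_Zf j1)
    have i5: "integrable M (\<lambda>\<omega>. Zf j (Suc t) \<omega> ^ 2)" by (intro Lall_int Lall_power Lall_Zf j1)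
    show ?thesis using i1 i2 i3 i4 i5 by (simp add: Vf_def prob_space)
  qed
  also have "\<dots> \<le> Vf j t + 2 * (q * (2 / (1 - q))) + 2"
  proof -
    have "(\<integral>\<omega>. Tf j t \<omega> * Zf j (Suc t) \<omega> ^ 2 \<partial>M) = q * Gf j t"
      using H_eq[OF j, of t] by (simp add: Gf_def q_def)
    also have "\<dots> \<le> q * (2 / (1 - q))" using mult_left_mono[OF G_bound[OF j, of t] q0] by (simp add: q_def)
    finally show ?thesis using E_Tf[OF j, of t] E_Z4[OF j, of "Suc t"] E_Zsq[OF j, of "Suc t"] by simp
  qed
  also have "\<dots> \<le> (2 * q * (2 / (1 - q)) + 2) * real (Suc t)"
  proof -
    define K where "K = 2 / (1 - q)"
    have IH: "Vf j t \<le> (2 * q * K + 2) * real t" using Suc by (simp add: K_def q_def)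
    have "(2 * q * K + 2) * real (Suc t) = (2 * q * K + 2) * real t + (2 * q * K + 2)" by (simp add: algebra_simps)
    then show ?thesis using IH unfolding K_def[symmetric] by linarith
  qed
  finally show ?case by (simp add: q_def)
qed

lemma AE_sub:
  assumes j: "j \<in> {2..n}"
  shows "AE \<omega> in M. (\<lambda>m. Sf j ((m + 1) ^ 2) \<omega> / real ((m + 1) ^ 2)) \<longlonglongrightarrow> 1"
proof -
  have j1: "j \<in> {1..n}" using j by auto
  define C where "C = 2 * (1 - c) ^ 2 * (2 / (1 - (1 - c) ^ 2)) + 2"
  define N where "N m = (m + 1) ^ 2" for m :: nat
  define g where "g m \<omega> = (Tf j (N m) \<omega> / real (N m)) ^ 2" for m \<omega>
  have Ng: "real (N m) > 0" for m by (simp add: N_def)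
  have gm[measurable]: "g m \<in> borel_measurable M" for m
    using Lall_meas[OF Lall_Tf[OF j1]] unfolding g_def[abs_def] by measurable
  have gi: "integrable M (g m)" for m
  proof -
    have "Lall (\<lambda>\<omega>. inverse (real (N m)) * Tf j (N m) \<omega>)" by (intro Lall_cmult Lall_Tf j1)
    then have "Lall (\<lambda>\<omega>. Tf j (N m) \<omega> / real (N m))" by (simp add: divide_inverse mult.commute)
    then show ?thesis unfolding g_def[abs_def] by (intro Lall_int Lall_power)
  qed
  have gnn: "0 \<le> g m \<omega>" for m \<omega> by (simp add: g_def)
  have Eg: "(\<integral>\<omega>. g m \<omega> \<partial>M) \<le> C * inverse (real (Suc m) ^ 2)" for m
  proof -
    have "(\<integral>\<omega>. g m \<omega> \<partial>M) = Vf j (N m) / real (N m) ^ 2"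
      unfolding g_def Vf_def by (simp add: power_divide)
    also have "\<dots> \<le> C * real (N m) / real (N m) ^ 2"
      using V_bound[OF j, of "N m"] by (intro divide_right_mono) (simp_all add: C_def)
    also have "\<dots> = C / real (N m)"
      using Ng[of m] by (simp add: power2_eq_square)
    also have "\<dots> = C * inverse (real (Suc m) ^ 2)"
      by (simp add: N_def divide_inverse)
    finally show ?thesis .
  qed
  have Egnn: "0 \<le> (\<integral>\<omega>. g m \<omega> \<partial>M)" for m by (rule integral_nonneg_AE) (simp add: gnn)
  have summ: "summable (\<lambda>m. (\<integral>\<omega>. g m \<omega> \<partial>M))"
  proof (rule summable_comparison_test[where g="\<lambda>m. C * inverse (real (Suc m) ^ 2)"])
    show "\<exists>N. \<forall>m\<ge>N. norm (\<integral>\<omega>. g m \<omega> \<partial>M) \<le> C * inverse (real (Suc m) ^ 2)"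
      using Eg Egnn by auto
    have "summable (\<lambda>m. inverse (real m ^ 2))" by (rule inverse_power_summable) simp
    then have "summable (\<lambda>m. inverse (real (Suc m) ^ 2))" by (subst summable_Suc_iff)
    then show "summable (\<lambda>m. C * inverse (real (Suc m) ^ 2))" by (rule summable_mult)
  qed
  have "(\<integral>\<^sup>+\<omega>. (\<Sum>m. ennreal (g m \<omega>)) \<partial>M) = (\<Sum>m. \<integral>\<^sup>+\<omega>. ennreal (g m \<omega>) \<partial>M)"
    by (rule nn_integral_suminf) simp
  also have "\<dots> = (\<Sum>m. ennreal (\<integral>\<omega>. g m \<omega> \<partial>M))"
    by (intro suminf_cong nn_integral_eq_integral gi) (simp add: gnn)
  also have "\<dots> = ennreal (\<Sum>m. (\<integral>\<omega>. g m \<omega> \<partial>M))"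
    by (rule suminf_ennreal2[OF Egnn summ])
  finally have fin: "(\<integral>\<^sup>+\<omega>. (\<Sum>m. ennreal (g m \<omega>)) \<partial>M) \<noteq> \<infinity>" by simp
  have "AE \<omega> in M. (\<Sum>m. ennreal (g m \<omega>)) \<noteq> \<infinity>"
    by (rule nn_integral_PInf_AE[OF _ fin]) simp
  then show ?thesis
  proof (rule AE_mp, intro AE_I2 impI)
    fix \<omega> assume "(\<Sum>m. ennreal (g m \<omega>)) \<noteq> \<infinity>"
    then have "summable (\<lambda>m. g m \<omega>)" using summable_suminf_not_top[of "\<lambda>m. g m \<omega>"] gnn by auto
    then have "(\<lambda>m. g m \<omega>) \<longlonglongrightarrow> 0" by (rule summable_LIMSEQ_zero)
    then have "(\<lambda>m. sqrt (g m \<omega>)) \<longlonglongrightarrow> sqrt 0" by (rule tendsto_real_sqrt)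
    then have "(\<lambda>m. \<bar>Tf j (N m) \<omega> / real (N m)\<bar>) \<longlonglongrightarrow> 0" by (simp add: g_def)
    then have "(\<lambda>m. Tf j (N m) \<omega> / real (N m)) \<longlonglongrightarrow> 0" by (rule tendsto_rabs_zero_cancel)
    then have "(\<lambda>m. Tf j (N m) \<omega> / real (N m) + 1) \<longlonglongrightarrow> 0 + 1" by (intro tendsto_add tendsto_const)
    moreover have "Tf j (N m) \<omega> / real (N m) + 1 = Sf j ((m + 1) ^ 2) \<omega> / real ((m + 1) ^ 2)" for m
      using Ng[of m] by (simp add: Tf_def N_def field_simps)
    ultimately show "(\<lambda>m. Sf j ((m + 1) ^ 2) \<omega> / real ((m + 1) ^ 2)) \<longlonglongrightarrow> 1" by simp
  qed
qed

lemma AE_slln: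
  assumes j: "j \<in> {2..n}"
  shows "AE \<omega> in M. (\<lambda>t. Sf j t \<omega> / real t) \<longlonglongrightarrow> 1"
  using AE_sub[OF j]
proof (rule AE_mp, intro AE_I2 impI)
  fix \<omega> assume lim: "(\<lambda>m. Sf j ((m + 1) ^ 2) \<omega> / real ((m + 1) ^ 2)) \<longlonglongrightarrow> 1"
  show "(\<lambda>t. Sf j t \<omega> / real t) \<longlonglongrightarrow> 1"
  proof (rule slln_det[where S="\<lambda>t. Sf j t \<omega>", OF _ _ lim])
    show "mono (\<lambda>t. Sf j t \<omega>)"
      unfolding mono_def Sf_def by (auto intro!: sum_mono2)
    show "\<And>t. 0 \<le> Sf j t \<omega>" unfolding Sf_def by (auto intro!: sum_nonneg)
  qed
qed

end

lemma alg1: "t > 0 \<Longrightarrow> n > 0 \<Longrightarrow> d > 0 \<Longrightarrow>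
  c / (2 * d) * ((A + B) / n - t) / t - c / (2 * d * n) * (A / t - 1) = c / (2 * d * n) * (B / t - (n - 1))"
  for t n d c A B :: real
  by (simp add: field_simps)

lemma alg2: "n > 0 \<Longrightarrow> d > 0 \<Longrightarrow> c / (2 * d) * (X / n - 1) = c / (2 * d * n) * X + (- c / (2 * d))"
  for n d c X :: real
  by (simp add: field_simps)

lemma alg3: "n > 0 \<Longrightarrow> d > 0 \<Longrightarrow> c / (2 * d * n) * (E + (n - 1)) + (- c / (2 * d)) = c / (2 * d * n) * (E - 1)"
  for n d c E :: real
  by (simp add: field_simps)

theorem lemma11:
  fixes M :: "'a measure" and n lam :: nat and c d \<sigma>0 :: real
    and X0 :: "nat \<Rightarrow> real"
    and p0 :: "nat \<Rightarrow> 'a \<Rightarrow> real"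
    and xi :: "nat \<Rightarrow> nat \<Rightarrow> nat \<Rightarrow> 'a \<Rightarrow> real"
  assumes "prob_space M"
    and "n \<ge> 1" and "lam \<ge> 1" and "0 < c" and "c < 1" and "d > 0" and "\<sigma>0 > 0"
    and "prob_space.indep_vars M (\<lambda>_. borel)
           (\<lambda>k. case k of Inl j \<Rightarrow> p0 j | Inr (t, i, j) \<Rightarrow> xi t i j)
           ({Inl j | j. j \<in> {1..n}} \<union> {Inr (t, i, j) | t i j. i \<in> {1..lam} \<and> j \<in> {1..n}})"
    and "\<forall>j\<in>{1..n}. distributed M lborel (p0 j) std_normal_density"
    and "\<forall>t. \<forall>i\<in>{1..lam}. \<forall>j\<in>{1..n}. distributed M lborel (xi t i j) std_normal_density"
  shows "(AE \<omega> in M.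
           ((\<lambda>t. ln (csa_sigma n lam c d (\<lambda>x. x 1) X0 \<sigma>0 (\<lambda>j. p0 j \<omega>) (\<lambda>t i j. xi t i j \<omega>) t / \<sigma>0) / real t
               - c / (2 * d * real n) *
                 ((\<Sum>i=1..t. (csa_p n lam c d (\<lambda>x. x 1) X0 \<sigma>0 (\<lambda>j. p0 j \<omega>) (\<lambda>t i j. xi t i j \<omega>) i 1)\<^sup>2) / real t - 1))
            \<longlonglongrightarrow> 0))
       \<and> (\<forall>t. (\<integral>\<omega>. ln (csa_sigma n lam c d (\<lambda>x. x 1) X0 \<sigma>0 (\<lambda>j. p0 j \<omega>) (\<lambda>t i j. xi t i j \<omega>) (Suc t)
                      / csa_sigma n lam c d (\<lambda>x. x 1) X0 \<sigma>0 (\<lambda>j. p0 j \<omega>) (\<lambda>t i j. xi t i j \<omega>) t) \<partial>M)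
              = c / (2 * d * real n) *
                ((\<integral>\<omega>. (csa_p n lam c d (\<lambda>x. x 1) X0 \<sigma>0 (\<lambda>j. p0 j \<omega>) (\<lambda>t i j. xi t i j \<omega>) (Suc t) 1)\<^sup>2 \<partial>M) - 1))"
proof -
  interpret P: csa_prob M n lam c p0 xi
    by (intro csa_prob.intro csa_prob_axioms.intro) (use assms in auto)
  have lam1: "lam \<ge> 1" and s0: "\<sigma>0 > 0" and n1: "n \<ge> 1" and dpos: "d > 0" using assms by auto
  let ?sig = "\<lambda>\<omega> t. csa_sigma n lam c d (\<lambda>x. x 1) X0 \<sigma>0 (\<lambda>j. p0 j \<omega>) (\<lambda>t i j. xi t i j \<omega>) t"
  let ?p = "\<lambda>\<omega> t. csa_p n lam c d (\<lambda>x. x 1) X0 \<sigma>0 (\<lambda>j. p0 j \<omega>) (\<lambda>t i j. xi t i j \<omega>) t"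
  have pe: "?p \<omega> t = (\<lambda>j. P.Zf j t \<omega>)" for \<omega> t
    using csa_p_Pe[OF lam1 s0, of n c d X0 "\<lambda>j. p0 j \<omega>" "\<lambda>t i j. xi t i j \<omega>" t]
    unfolding P.envof_Yf by (simp add: P.Zf_def[abs_def])
  have sq: "sqnorm n (\<lambda>j. Pe lam c (envof (\<lambda>j. p0 j \<omega>) (\<lambda>t i j. xi t i j \<omega>)) t j) = (\<Sum>j\<in>{1..n}. P.Zf j t \<omega> ^ 2)" for \<omega> t
    unfolding P.envof_Yf sqnorm_def by (simp add: P.Zf_def)
  have lns: "ln (?sig \<omega> t / \<sigma>0) = (\<Sum>s<t. c / (2 * d) * ((\<Sum>j\<in>{1..n}. P.Zf j (Suc s) \<omega> ^ 2) / real n - 1))" for \<omega> t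
    using ln_sigma_sum[OF lam1 s0, of n c d X0 "\<lambda>j. p0 j \<omega>" "\<lambda>t i j. xi t i j \<omega>" t] unfolding sq .
  have lnstep: "ln (?sig \<omega> (Suc t) / ?sig \<omega> t) = c / (2 * d) * ((\<Sum>j\<in>{1..n}. P.Zf j (Suc t) \<omega> ^ 2) / real n - 1)" for \<omega> t
    using ln_sigma_step[OF lam1 s0, of n c d X0 "\<lambda>j. p0 j \<omega>" "\<lambda>t i j. xi t i j \<omega>" t] unfolding sq .
  have split: "(\<Sum>j\<in>{1..n}. f j) = f 1 + (\<Sum>j\<in>{2..n}. f j)" for f :: "nat \<Rightarrow> real"
    using sum.atLeast_Suc_atMost[OF n1, of f] by (simp add: numeral_2_eq_2)
  have card2: "real (card {2..n}) = real n - 1" using n1 by simp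
  have key: "ln (?sig \<omega> t / \<sigma>0) / real t - c / (2 * d * real n) * ((\<Sum>i=1..t. (?p \<omega> i 1)\<^sup>2) / real t - 1)
      = c / (2 * d * real n) * (\<Sum>j\<in>{2..n}. P.Sf j t \<omega> / real t - 1)" if t: "t \<ge> 1" for \<omega> t
  proof -
    have e1: "(\<Sum>s<t. (\<Sum>j\<in>{1..n}. P.Zf j (Suc s) \<omega> ^ 2)) = (\<Sum>j\<in>{1..n}. P.Sf j t \<omega>)"
      unfolding P.Sf_def by (subst sum.swap) (simp add: sum.atLeast1_atMost_eq)
    have "ln (?sig \<omega> t / \<sigma>0) = c / (2 * d) * ((\<Sum>s<t. (\<Sum>j\<in>{1..n}. P.Zf j (Suc s) \<omega> ^ 2)) / real n - real t)"
      unfolding lns by (simp add: sum_distrib_left sum_subtractf sum_divide_distrib[symmetric] algebra_simps)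
    also have "\<dots> = c / (2 * d) * ((P.Sf 1 t \<omega> + (\<Sum>j\<in>{2..n}. P.Sf j t \<omega>)) / real n - real t)"
      unfolding e1 by (simp only: split[of "\<lambda>j. P.Sf j t \<omega>"])
    finally have L: "ln (?sig \<omega> t / \<sigma>0) = c / (2 * d) * ((P.Sf 1 t \<omega> + (\<Sum>j\<in>{2..n}. P.Sf j t \<omega>)) / real n - real t)" .
    have P1: "(\<Sum>i=1..t. (?p \<omega> i 1)\<^sup>2) = P.Sf 1 t \<omega>"
      unfolding pe P.Sf_def by simp
    have R: "(\<Sum>j\<in>{2..n}. P.Sf j t \<omega> / real t - 1) = (\<Sum>j\<in>{2..n}. P.Sf j t \<omega>) / real t - (real n - 1)"
      using card2 by (simp add: sum_subtractf sum_divide_distrib)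
    have tp: "real t > 0" using t by simp
    have np: "real n > 0" using n1 by simp
    show ?thesis unfolding L P1 R by (rule alg1[OF tp np dpos])
  qed
  have AE1: "AE \<omega> in M. \<forall>j\<in>{2..n}. (\<lambda>t. P.Sf j t \<omega> / real t) \<longlonglongrightarrow> 1"
    by (rule AE_finite_allI) (auto intro: P.AE_slln)
  have part1: "AE \<omega> in M. ((\<lambda>t. ln (?sig \<omega> t / \<sigma>0) / real t - c / (2 * d * real n) * ((\<Sum>i=1..t. (?p \<omega> i 1)\<^sup>2) / real t - 1)) \<longlonglongrightarrow> 0)"
    using AE1
  proof (rule AE_mp, intro AE_I2 impI)
    fix \<omega> assume lim: "\<forall>j\<in>{2..n}. (\<lambda>t. P.Sf j t \<omega> / real t) \<longlonglongrightarrow> 1"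
    have "(\<lambda>t. c / (2 * d * real n) * (\<Sum>j\<in>{2..n}. P.Sf j t \<omega> / real t - 1)) \<longlonglongrightarrow> c / (2 * d * real n) * (\<Sum>j\<in>{2..n}. 1 - 1)"
      using lim by (intro tendsto_mult tendsto_const tendsto_sum tendsto_diff) auto
    then have lim0: "(\<lambda>t. c / (2 * d * real n) * (\<Sum>j\<in>{2..n}. P.Sf j t \<omega> / real t - 1)) \<longlonglongrightarrow> 0" by simp
    have ev: "eventually (\<lambda>t. c / (2 * d * real n) * (\<Sum>j\<in>{2..n}. P.Sf j t \<omega> / real t - 1) =
        ln (?sig \<omega> t / \<sigma>0) / real t - c / (2 * d * real n) * ((\<Sum>i=1..t. (?p \<omega> i 1)\<^sup>2) / real t - 1)) sequentially"
      using eventually_ge_at_top[of "1::nat"] by eventually_elim (rule key[symmetric])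
    show "(\<lambda>t. ln (?sig \<omega> t / \<sigma>0) / real t - c / (2 * d * real n) * ((\<Sum>i=1..t. (?p \<omega> i 1)\<^sup>2) / real t - 1)) \<longlonglongrightarrow> 0"
      using tendsto_cong[OF ev] lim0 by simp
  qed
  have part2: "(\<integral>\<omega>. ln (?sig \<omega> (Suc t) / ?sig \<omega> t) \<partial>M) = c / (2 * d * real n) * ((\<integral>\<omega>. (?p \<omega> (Suc t) 1)\<^sup>2 \<partial>M) - 1)" for t
  proof -
    have int: "integrable M (\<lambda>\<omega>. P.Zf j (Suc t) \<omega> ^ 2)" if "j \<in> {1..n}" for j
      by (intro P.Lall_int P.Lall_power P.Lall_Zf that)
    have "(\<integral>\<omega>. ln (?sig \<omega> (Suc t) / ?sig \<omega> t) \<partial>M) =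
        (\<integral>\<omega>. c / (2 * d * real n) * (\<Sum>j\<in>{1..n}. P.Zf j (Suc t) \<omega> ^ 2) + (- c / (2 * d)) \<partial>M)"
      unfolding lnstep using n1 dpos by (intro Bochner_Integration.integral_cong refl alg2) simp_all
    also have "\<dots> = c / (2 * d * real n) * (\<Sum>j\<in>{1..n}. (\<integral>\<omega>. P.Zf j (Suc t) \<omega> ^ 2 \<partial>M)) + (- c / (2 * d))"
    proof -
      have intS: "integrable M (\<lambda>\<omega>. (\<Sum>j\<in>{1..n}. P.Zf j (Suc t) \<omega> ^ 2))"
        by (rule Bochner_Integration.integrable_sum) (rule int)
      have "(\<integral>\<omega>. c / (2 * d * real n) * (\<Sum>j\<in>{1..n}. P.Zf j (Suc t) \<omega> ^ 2) + (- c / (2 * d)) \<partial>M)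
          = (\<integral>\<omega>. c / (2 * d * real n) * (\<Sum>j\<in>{1..n}. P.Zf j (Suc t) \<omega> ^ 2) \<partial>M) + (\<integral>\<omega>. (- c / (2 * d)) \<partial>M)"
        by (rule Bochner_Integration.integral_add) (use intS in auto)
      also have "(\<integral>\<omega>. c / (2 * d * real n) * (\<Sum>j\<in>{1..n}. P.Zf j (Suc t) \<omega> ^ 2) \<partial>M)
          = c / (2 * d * real n) * (\<integral>\<omega>. (\<Sum>j\<in>{1..n}. P.Zf j (Suc t) \<omega> ^ 2) \<partial>M)"
        by (rule Bochner_Integration.integral_mult_right_zero)
      also have "(\<integral>\<omega>. (\<Sum>j\<in>{1..n}. P.Zf j (Suc t) \<omega> ^ 2) \<partial>M) = (\<Sum>j\<in>{1..n}. (\<integral>\<omega>. P.Zf j (Suc t) \<omega> ^ 2 \<partial>M))"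
        by (rule Bochner_Integration.integral_sum) (rule int)
      also have "(\<integral>\<omega>. (- c / (2 * d)) \<partial>M) = - c / (2 * d)"
        by (simp add: P.prob_space)
      finally show ?thesis .
    qed
    also have "(\<Sum>j\<in>{1..n}. (\<integral>\<omega>. P.Zf j (Suc t) \<omega> ^ 2 \<partial>M)) = (\<integral>\<omega>. P.Zf 1 (Suc t) \<omega> ^ 2 \<partial>M) + (real n - 1)"
      unfolding split using card2 by (simp add: P.E_Zsq)
    also have "(\<integral>\<omega>. (?p \<omega> (Suc t) 1)\<^sup>2 \<partial>M) = (\<integral>\<omega>. P.Zf 1 (Suc t) \<omega> ^ 2 \<partial>M)"
      unfolding pe ..
    ultimately show ?thesis using alg3[of "real n" d c] n1 dpos by simp
  qed
  show ?thesis using part1 part2 by blast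
qed

end
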